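(* Let $m\ge 3$ be odd, $n\ge2$, and let $\mathcal{A}=(a_{i_1\dots i_m})$ be a real symmetric $m$th order $n$-dimensional tensor which is strongly positive semi-definite. Then $a_{i_1\dots i_m}\ge 0$ whenever at least $m-1$ of the indices $i_1,\dots,i_m$ are equal. If furthermore $\mathcal{A}$ is strongly positive definite, then $a_{i_1\dots i_m}>0$ whenever at least $m-1$ of the indices $i_1,\dots,i_m$ are equal.
   Context: For $\mathbf{x}\in\mathbb{R}^n$, $\mathcal{A}\mathbf{x}^{m-1}$ is the vector with $i$th component $\sum_{i_2,\dots,i_m=1}^n a_{ii_2\dots i_m}x_{i_2}\cdots x_{i_m}$. For odd $m$ and symmetric $\mathcal{A}$, $\mathcal{A}$ is strongly positive semi-definite if $\mathcal{A}\mathbf{x}^{m-1}\ge\mathbf{0}$ componentwise for all $\mathbf{x}\in\mathbb{R}^n$, and strongly positive definite if $\mathcal{A}\mathbf{x}^{m-1}>\mathbf{0}$ componentwise for all nonzero $\mathbf{x}\in\mathbb{R}^n$. *)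

theory Defs
  imports Complex_Main "HOL-Library.Multiset"
begin

text \<open>A real m-th order n-dimensional tensor is a function on index lists
  of length m with entries in {0..<n} (indices are 0-based). Values outside
  this index set are irrelevant.\<close>

definition idx :: "nat \<Rightarrow> nat \<Rightarrow> nat list set" where
  "idx k n = {xs. length xs = k \<and> set xs \<subseteq> {..<n}}"

definition symmetric_tensor :: "nat \<Rightarrow> nat \<Rightarrow> (nat list \<Rightarrow> real) \<Rightarrow> bool" where
  "symmetric_tensor m n A \<longleftrightarrow>
     (\<forall>xs \<in> idx m n. \<forall>ys \<in> idx m n. mset xs = mset ys \<longrightarrow> A xs = A ys)"

text \<open>i-th component of A x^(m-1):
  sum over i_2..i_m of a_{i i_2 ... i_m} x_{i_2} ... x_{i_m}.\<close>
definition tensor_apply :: "nat \<Rightarrow> nat \<Rightarrow> (nat list \<Rightarrow> real) \<Rightarrow> (nat \<Rightarrow> real) \<Rightarrow> nat \<Rightarrow> real" where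
  "tensor_apply m n A x i = (\<Sum>ys \<in> idx (m - 1) n. A (i # ys) * (\<Prod>j<length ys. x (ys ! j)))"

definition strongly_psd :: "nat \<Rightarrow> nat \<Rightarrow> (nat list \<Rightarrow> real) \<Rightarrow> bool" where
  "strongly_psd m n A \<longleftrightarrow> (\<forall>x. \<forall>i<n. tensor_apply m n A x i \<ge> 0)"

definition strongly_pd :: "nat \<Rightarrow> nat \<Rightarrow> (nat list \<Rightarrow> real) \<Rightarrow> bool" where
  "strongly_pd m n A \<longleftrightarrow>
     (\<forall>x. (\<exists>j<n. x j \<noteq> 0) \<longrightarrow> (\<forall>i<n. tensor_apply m n A x i > 0))"

end

theory Submission
  imports Defs
begin

lemma finite_idx: "finite (idx k n)"
proof -
  have "idx k n = {xs. set xs \<subseteq> {..<n} \<and> length xs = k}" unfolding idx_def by auto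
  thus ?thesis using finite_lists_length_eq[of "{..<n}" k] by simp
qed

lemma prod_ind: "(\<Prod>t<length ys. (\<lambda>u. if u = j then (1::real) else 0) (ys ! t))
   = (if (\<forall>y\<in>set ys. y = j) then 1 else 0)"
proof -
  have "(\<Prod>t<length ys. (\<lambda>u. if u = j then (1::real) else 0) (ys ! t))
     = prod_list (map (\<lambda>u. if u = j then (1::real) else 0) ys)"
    by (simp add: prod.list_conv_set_nth atLeast0LessThan)
  also have "\<dots> = (if (\<forall>y\<in>set ys. y = j) then 1 else 0)"
    by (induction ys) auto
  finally show ?thesis .
qed

lemma apply_unit:
  assumes "j < n" "m \<ge> 1"
  shows "tensor_apply m n A (\<lambda>u. if u = j then 1 else 0) k = A (k # replicate (m - 1) j)"
proof -
  have "tensor_apply m n A (\<lambda>u. if u = j then 1 else 0) k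
     = (\<Sum>ys \<in> idx (m - 1) n. if replicate (m - 1) j = ys then A (k # ys) else 0)"
    unfolding tensor_apply_def
  proof (rule sum.cong)
    fix ys assume "ys \<in> idx (m - 1) n"
    hence l: "length ys = m - 1" by (simp add: idx_def)
    have "(\<forall>y\<in>set ys. y = j) \<longleftrightarrow> replicate (m - 1) j = ys"
      using l replicate_length_same[of ys j] by auto
    thus "A (k # ys) * (\<Prod>t<length ys. (\<lambda>u. if u = j then 1 else 0) (ys ! t)) =
      (if replicate (m - 1) j = ys then A (k # ys) else 0)" by (simp only: prod_ind) simp
  qed simp
  also have "\<dots> = A (k # replicate (m - 1) j)"
    using assms by (subst sum.delta'[OF finite_idx]) (auto simp: idx_def)
  finally show ?thesis .
qed

lemma decomp:
  assumes "xs \<in> idx m n" "count (mset xs) j \<ge> m - 1" "m \<ge> 2"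
    and True: "symmetric_tensor m n A"
  shows "\<exists>k<n. j < n \<and> A xs = A (k # replicate (m - 1) j)"
proof -
  have len: "length xs = m" and sub: "set xs \<subseteq> {..<n}" using assms(1) by (auto simp: idx_def)
  have "j \<in> set xs" using assms(2,3) by (metis count_mset_0_iff not_one_le_zero diff_is_0_eq le_0_eq Suc_1 not_less_eq_eq le_trans Suc_leI zero_less_diff One_nat_def)
  hence jn: "j < n" using sub by auto
  define M where "M = mset xs - replicate_mset (m - 1) j"
  have le: "replicate_mset (m - 1) j \<subseteq># mset xs"
    using assms(2) by (simp add: subseteq_mset_def count_replicate_mset)
  hence eq: "mset xs = M + replicate_mset (m - 1) j" unfolding M_def by simp
  have "size M = 1" using eq len assms(3)
    by (metis add_diff_cancel_right' size_mset size_replicate_mset size_union diff_diff_cancel le_trans one_le_numeral)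
  then obtain k where Mk: "M = {#k#}" by (metis size_1_singleton_mset)
  hence "k \<in> set xs" using eq by (metis set_mset_mset union_iff union_single_eq_member)
  hence kn: "k < n" using sub by auto
  have mem: "k # replicate (m - 1) j \<in> idx m n" using kn jn assms(3) by (auto simp: idx_def)
  have "mset xs = mset (k # replicate (m - 1) j)" using eq Mk by (simp add: add.commute)
  hence "A xs = A (k # replicate (m - 1) j)" using True assms(1) mem unfolding symmetric_tensor_def by blast
  thus ?thesis using kn jn by blast
qed

theorem proposition3p2:
  fixes m n :: nat and A :: "nat list \<Rightarrow> real"
  assumes "odd m" and "m \<ge> 3" and "n \<ge> 2"
    and "symmetric_tensor m n A"
    and "strongly_psd m n A"
  shows "(\<forall>xs \<in> idx m n. (\<exists>j. count (mset xs) j \<ge> m - 1) \<longrightarrow> A xs \<ge> 0) \<and>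
         (strongly_pd m n A \<longrightarrow>
           (\<forall>xs \<in> idx m n. (\<exists>j. count (mset xs) j \<ge> m - 1) \<longrightarrow> A xs > 0))"
proof -
  have key: "\<exists>k<n. \<exists>j<n. A xs = tensor_apply m n A (\<lambda>u. if u = j then 1 else 0) k"
    if h1: "xs \<in> idx m n" and h2: "count (mset xs) j \<ge> m - 1" for xs j
  proof -
    obtain k where "k < n" "j < n" "A xs = A (k # replicate (m - 1) j)"
      using decomp[OF h1 h2 _ assms(4)] assms(2) by force
    thus ?thesis using apply_unit[of j n m A k] assms(2) by (metis One_nat_def le_trans one_le_numeral)
  qed
  show ?thesis
  proof (intro conjI impI ballI)
    fix xs assume "xs \<in> idx m n" "\<exists>j. m - 1 \<le> count (mset xs) j"
    then obtain k j where "k < n" "j < n" "A xs = tensor_apply m n A (\<lambda>u. if u = j then 1 else 0) k"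
      using key by blast
    thus "0 \<le> A xs" using assms(5) unfolding strongly_psd_def by simp
  next
    fix xs assume pd: "strongly_pd m n A" and "xs \<in> idx m n" "\<exists>j. m - 1 \<le> count (mset xs) j"
    then obtain k j where "k < n" "j < n" "A xs = tensor_apply m n A (\<lambda>u. if u = j then 1 else 0) k"
      using key by blast
    moreover have "\<exists>t<n. (\<lambda>u. if u = j then (1::real) else 0) t \<noteq> 0" using \<open>j < n\<close> by auto
    ultimately show "0 < A xs" using pd unfolding strongly_pd_def by simp
  qed
qed

end
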